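(* Let $\mathbf A$ be an algebra of type $\tau$ equipped with a partition system $\sigma\mapsto\langle\odot^\sigma_0,\dots,\odot^\sigma_n\rangle$. Let $\equiv$ be the common equivalence relation $\equiv_\odot$ of the left normal bands in the system, let $I\subseteq A$ be a set of representatives of its classes, made into a join-semilattice $\mathbf I=\langle I,\vee\rangle$ by letting $p\vee q$ be the representative of the class of $p\odot q$ (for any $\odot$ of the system), with order $\preceq$, and let $A_p$ denote the class of $p$. Then: (1) each $A_p$ is closed under all operations of $\mathbf A$ of positive arity, and becomes an algebra $\mathbf A_p$ of type $\tau$ by setting $\omega^{\mathbf A_p}:=\omega^{\mathbf A}\odot^\omega_0 p$ for each constant symbol $\omega$; (2) for all $p\preceq q$ in $\mathbf I$ the assignment $\xi_{pq}$ with $\xi^{\sigma i}_{pq}(a):=a\odot^\sigma_i q$ (for each $n$-ary $\sigma$ and $0\le i\le n$, $a\in A_p$) is a well-defined metamorphism $\mathbf A_p\Rightarrow\mathbf A_q$; (3) $\{\xi_{pq}: p\preceq q\}$ is a semilattice directed system of metamorphisms and $\mathbf A$ is its Płonka sum.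
   Context: A left normal band on a set $A$ is a binary operation $\odot$ with $a\odot a=a$, $a\odot(b\odot c)=(a\odot b)\odot c$, $a\odot(b\odot c)=a\odot(c\odot b)$ for all $a,b,c$. Put $a\preceq_\odot b\iff b\odot a=b$ and $a\equiv_\odot b\iff a\preceq_\odot b$ and $b\preceq_\odot a$; then $\preceq_\odot$ is a preorder, $\equiv_\odot$ a congruence, and the quotient is a join-semilattice. Two left normal bands $\odot,\otimes$ on $A$ are homotactic if $\preceq_\odot=\preceq_\otimes$. For an algebra $\mathbf A$ of type $\tau$, a partition system is an assignment to each $n$-ary operation symbol $\sigma$ (constants: $n=0$) of a tuple $\langle\odot^\sigma_0,\dots,\odot^\sigma_n\rangle$ of left normal bands on $A$, all of them (over all $\sigma$) pairwise homotactic, such that for all $a_1,\dots,a_n,b\in A$: (PF4$^\sigma$) if $n\ge1$, $\sigma^{\mathbf A}(a_1,\dots,a_n)\odot^\sigma_0 b=\sigma^{\mathbf A}(a_1\odot^\sigma_1 b,\dots,a_n\odot^\sigma_n b)$; (PF5$^\sigma$) $b\odot^\sigma_0\sigma^{\mathbf A}(a_1,\dots,a_n)=b\odot^\sigma_0a_1\odot^\sigma_0\cdots\odot^\sigma_0a_n$ (for a constant $\omega$: $b\odot^\omega_0\omega^{\mathbf A}=b$). A metamorphism $f:\mathbf A\Rightarrow\mathbf B$ between algebras of type $\tau$ assigns to each $n$-ary symbol $\sigma$ a tuple of maps $f^{\sigma0},\dots,f^{\sigma n}:A\to B$ such that $f^{\sigma0}(\sigma^{\mathbf A}(a_1,\dots,a_n))=\sigma^{\mathbf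 B}(f^{\sigma1}(a_1),\dots,f^{\sigma n}(a_n))$ (for constants $f^{\omega0}(\omega^{\mathbf A})=\omega^{\mathbf B}$); composition and identities are componentwise. A semilattice directed system of metamorphisms over a join-semilattice $\mathbf I$ is a family of pairwise disjoint algebras $\mathbf A_p$ ($p\in I$) with metamorphisms $\xi_{pq}:\mathbf A_p\Rightarrow\mathbf A_q$ for $p\preceq q$ such that $\xi_{pp}$ is the identity and $\xi_{qr}\circ\xi_{pq}=\xi_{pr}$. Its Płonka sum is the algebra on $\biguplus_pA_p$ with $\sigma(a_1,\dots,a_n):=\sigma^{\mathbf A_q}(\xi^{\sigma1}_{p_1q}(a_1),\dots,\xi^{\sigma n}_{p_nq}(a_n))$ for $a_i\in A_{p_i}$, $q=p_1\vee\dots\vee p_n$, and (if $\tau$ has constants, $\mathbf I$ must have a least element $\bot$) $\omega:=\omega^{\mathbf A_\bot}$. *)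

theory Defs
  imports Main
begin

text \<open>Signature (type tau): a set of operation symbols S with arities ar.
  An algebra of type tau: carrier A and interpretation op, where op s xs is
  meaningful for lists xs of length ar s (constants: xs = []).
  A partition system: band s i is the i-th left normal band attached to
  symbol s (0 \<le> i \<le> ar s).\<close>

definition is_algebra :: "'a set \<Rightarrow> 's set \<Rightarrow> ('s \<Rightarrow> nat) \<Rightarrow> ('s \<Rightarrow> 'a list \<Rightarrow> 'a) \<Rightarrow> bool" where
  "is_algebra A S ar op \<longleftrightarrow>
     (\<forall>s\<in>S. \<forall>xs. length xs = ar s \<and> set xs \<subseteq> A \<longrightarrow> op s xs \<in> A)"

definition left_normal_band :: "'a set \<Rightarrow> ('a \<Rightarrow> 'a \<Rightarrow> 'a) \<Rightarrow> bool" where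
  "left_normal_band A f \<longleftrightarrow>
     (\<forall>a\<in>A. \<forall>b\<in>A. f a b \<in> A) \<and>
     (\<forall>a\<in>A. f a a = a) \<and>
     (\<forall>a\<in>A. \<forall>b\<in>A. \<forall>c\<in>A. f a (f b c) = f (f a b) c) \<and>
     (\<forall>a\<in>A. \<forall>b\<in>A. \<forall>c\<in>A. f a (f b c) = f a (f c b))"

definition band_le :: "('a \<Rightarrow> 'a \<Rightarrow> 'a) \<Rightarrow> 'a \<Rightarrow> 'a \<Rightarrow> bool" where
  "band_le f a b \<longleftrightarrow> f b a = b"

definition homotactic :: "'a set \<Rightarrow> ('a \<Rightarrow> 'a \<Rightarrow> 'a) \<Rightarrow> ('a \<Rightarrow> 'a \<Rightarrow> 'a) \<Rightarrow> bool" where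
  "homotactic A f g \<longleftrightarrow> (\<forall>a\<in>A. \<forall>b\<in>A. band_le f a b \<longleftrightarrow> band_le g a b)"

definition partition_system ::
  "'a set \<Rightarrow> 's set \<Rightarrow> ('s \<Rightarrow> nat) \<Rightarrow> ('s \<Rightarrow> 'a list \<Rightarrow> 'a) \<Rightarrow> ('s \<Rightarrow> nat \<Rightarrow> 'a \<Rightarrow> 'a \<Rightarrow> 'a) \<Rightarrow> bool" where
  "partition_system A S ar op band \<longleftrightarrow>
     (\<forall>s\<in>S. \<forall>i\<le>ar s. left_normal_band A (band s i)) \<and>
     (\<forall>s\<in>S. \<forall>i\<le>ar s. \<forall>t\<in>S. \<forall>j\<le>ar t. homotactic A (band s i) (band t j)) \<and>
     \<comment> \<open>PF4\<close>
     (\<forall>s\<in>S. 1 \<le> ar s \<longrightarrow> (\<forall>xs b. length xs = ar s \<and> set xs \<subseteq> A \<and> b \<in> A \<longrightarrow>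
         band s 0 (op s xs) b = op s (map (\<lambda>k. band s (Suc k) (xs ! k) b) [0..<ar s]))) \<and>
     \<comment> \<open>PF5 (for constants this reads b \<odot> omega = b)\<close>
     (\<forall>s\<in>S. \<forall>xs b. length xs = ar s \<and> set xs \<subseteq> A \<and> b \<in> A \<longrightarrow>
         band s 0 b (op s xs) = foldl (band s 0) b xs)"

text \<open>The common preorder / equivalence, computed from a fixed band of the system
  (band s0 0 for a fixed symbol s0; all bands of the system are homotactic).\<close>
definition band_eqv :: "('a \<Rightarrow> 'a \<Rightarrow> 'a) \<Rightarrow> 'a \<Rightarrow> 'a \<Rightarrow> bool" where
  "band_eqv f a b \<longleftrightarrow> band_le f a b \<and> band_le f b a"

definition cls :: "'a set \<Rightarrow> ('a \<Rightarrow> 'a \<Rightarrow> 'a) \<Rightarrow> 'a \<Rightarrow> 'a set" where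
  "cls A f p = {a\<in>A. band_eqv f a p}"

definition repr :: "'a set \<Rightarrow> ('a \<Rightarrow> 'a \<Rightarrow> 'a) \<Rightarrow> 'a \<Rightarrow> 'a" where
  "repr I f a = (THE p. p \<in> I \<and> band_eqv f a p)"

definition rjoin :: "'a set \<Rightarrow> ('a \<Rightarrow> 'a \<Rightarrow> 'a) \<Rightarrow> 'a \<Rightarrow> 'a \<Rightarrow> 'a" where
  "rjoin I f p q = repr I f (f p q)"

end

theory Submission
  imports Defs
begin


lemma lnb_closed: "left_normal_band A f \<Longrightarrow> a\<in>A \<Longrightarrow> b\<in>A \<Longrightarrow> f a b \<in> A"
  unfolding left_normal_band_def by blast
lemma lnb_idem: "left_normal_band A f \<Longrightarrow> a\<in>A \<Longrightarrow> f a a = a"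
  unfolding left_normal_band_def by blast
lemma lnb_assoc: "left_normal_band A f \<Longrightarrow> a\<in>A \<Longrightarrow> b\<in>A \<Longrightarrow> c\<in>A \<Longrightarrow> f (f a b) c = f a (f b c)"
  unfolding left_normal_band_def by metis
lemma lnb_ln: "left_normal_band A f \<Longrightarrow> a\<in>A \<Longrightarrow> b\<in>A \<Longrightarrow> c\<in>A \<Longrightarrow> f (f a b) c = f (f a c) b"
  unfolding left_normal_band_def by metis

lemma lnb_trans: assumes "left_normal_band A f" "a\<in>A" "b\<in>A" "c\<in>A" "band_le f a b" "band_le f b c"
  shows "band_le f a c"
proof -
  have "f c a = f (f c b) a" using assms(6) by (simp add: band_le_def)
  also have "\<dots> = f c (f b a)" using lnb_assoc[OF assms(1) assms(4,3,2)] .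
  also have "\<dots> = c" using assms(5,6) by (simp add: band_le_def)
  finally show ?thesis by (simp add: band_le_def)
qed

lemma lnb_ub1: assumes "left_normal_band A f" "p\<in>A" "q\<in>A" shows "band_le f p (f p q)"
  using lnb_ln[OF assms(1) assms(2,3,2)] lnb_idem[OF assms(1,2)] by (simp add: band_le_def)
lemma lnb_ub2: assumes "left_normal_band A f" "p\<in>A" "q\<in>A" shows "band_le f q (f p q)"
  using lnb_assoc[OF assms(1) assms(2,3,3)] lnb_idem[OF assms(1,3)] by (simp add: band_le_def)
lemma lnb_lub: assumes "left_normal_band A f" "p\<in>A" "q\<in>A" "r\<in>A" "band_le f p r" "band_le f q r"
  shows "band_le f (f p q) r"
  using lnb_assoc[OF assms(1) assms(4,2,3)] assms(5,6) by (simp add: band_le_def)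

lemma foldl_closed: "left_normal_band A f \<Longrightarrow> b\<in>A \<Longrightarrow> set xs \<subseteq> A \<Longrightarrow> foldl f b xs \<in> A"
  by (induction xs arbitrary: b) (auto intro: lnb_closed)

lemma foldl_fix: "\<forall>x\<in>set xs. f b x = b \<Longrightarrow> foldl f b xs = b"
  by (induction xs) auto

lemma foldl_comm: "left_normal_band A f \<Longrightarrow> c\<in>A \<Longrightarrow> y\<in>A \<Longrightarrow> set ys \<subseteq> A \<Longrightarrow>
   f (foldl f c ys) y = foldl f (f c y) ys"
proof (induction ys arbitrary: c)
  case Nil then show ?case by simp
next
  case (Cons z zs)
  have "f (foldl f c (z#zs)) y = foldl f (f (f c z) y) zs"
    using Cons by (simp add: lnb_closed)
  also have "f (f c z) y = f (f c y) z" using lnb_ln Cons.prems by fastforce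
  finally show ?case by simp
qed

lemma foldl_absorb: "left_normal_band A f \<Longrightarrow> b\<in>A \<Longrightarrow> set xs \<subseteq> A \<Longrightarrow> x \<in> set xs \<Longrightarrow>
   f (foldl f b xs) x = foldl f b xs"
proof (induction xs arbitrary: b)
  case Nil then show ?case by simp
next
  case (Cons y ys)
  show ?case
  proof (cases "x = y")
    case True
    have "f (foldl f b (y#ys)) x = foldl f (f (f b y) y) ys"
      using foldl_comm[of A f "f b y" y ys] Cons.prems True by (simp add: lnb_closed)
    also have "f (f b y) y = f b y" using Cons.prems lnb_assoc[of A f b y y] lnb_idem[of A f y] by simp
    finally show ?thesis by simp
  next
    case False
    then show ?thesis using Cons by (simp add: lnb_closed)
  qed
qed

theorem theorem4p5:
  fixes A :: "'a set" and S :: "'s set" and ar :: "'s \<Rightarrow> nat"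
    and op :: "'s \<Rightarrow> 'a list \<Rightarrow> 'a" and band :: "'s \<Rightarrow> nat \<Rightarrow> 'a \<Rightarrow> 'a \<Rightarrow> 'a"
    and s0 :: 's and I :: "'a set"
  assumes alg: "is_algebra A S ar op"
    and ps: "partition_system A S ar op band"
    and s0: "s0 \<in> S"
    and I_sub: "I \<subseteq> A"
    and I_rep: "\<forall>a\<in>A. \<exists>!p. p \<in> I \<and> band_eqv (band s0 0) a p"
  shows
    \<comment> \<open>I with the join is a join-semilattice with order \<preceq>\<close>
    "(\<forall>p\<in>I. band_le (band s0 0) p p) \<and>
     (\<forall>p\<in>I. \<forall>q\<in>I. \<forall>r\<in>I. band_le (band s0 0) p q \<and> band_le (band s0 0) q r \<longrightarrow> band_le (band s0 0) p r) \<and>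
     (\<forall>p\<in>I. \<forall>q\<in>I. band_le (band s0 0) p q \<and> band_le (band s0 0) q p \<longrightarrow> p = q) \<and>
     (\<forall>p\<in>I. \<forall>q\<in>I. rjoin I (band s0 0) p q \<in> I \<and>
        band_le (band s0 0) p (rjoin I (band s0 0) p q) \<and> band_le (band s0 0) q (rjoin I (band s0 0) p q) \<and>
        (\<forall>r\<in>I. band_le (band s0 0) p r \<and> band_le (band s0 0) q r \<longrightarrow> band_le (band s0 0) (rjoin I (band s0 0) p q) r)) \<and>
     \<comment> \<open>(1) closure of A_p\<close>
     (\<forall>p\<in>I. \<forall>s\<in>S. 1 \<le> ar s \<longrightarrow> (\<forall>xs. length xs = ar s \<and> set xs \<subseteq> cls A (band s0 0) p \<longrightarrow>
          op s xs \<in> cls A (band s0 0) p)) \<and>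
     (\<forall>p\<in>I. \<forall>w\<in>S. ar w = 0 \<longrightarrow> band w 0 (op w []) p \<in> cls A (band s0 0) p) \<and>
     \<comment> \<open>(2) xi_pq is a well-defined metamorphism A_p => A_q\<close>
     (\<forall>p\<in>I. \<forall>q\<in>I. band_le (band s0 0) p q \<longrightarrow>
        (\<forall>s\<in>S. \<forall>i\<le>ar s. \<forall>a\<in>cls A (band s0 0) p. band s i a q \<in> cls A (band s0 0) q) \<and>
        (\<forall>s\<in>S. 1 \<le> ar s \<longrightarrow> (\<forall>xs. length xs = ar s \<and> set xs \<subseteq> cls A (band s0 0) p \<longrightarrow>
            band s 0 (op s xs) q = op s (map (\<lambda>k. band s (Suc k) (xs ! k) q) [0..<ar s]))) \<and>
        (\<forall>w\<in>S. ar w = 0 \<longrightarrow> band w 0 (band w 0 (op w []) p) q = band w 0 (op w []) q)) \<and>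
     \<comment> \<open>(3) semilattice directed system\<close>
     (\<forall>p\<in>I. \<forall>q\<in>I. p \<noteq> q \<longrightarrow> cls A (band s0 0) p \<inter> cls A (band s0 0) q = {}) \<and>
     (\<forall>p\<in>I. \<forall>s\<in>S. \<forall>i\<le>ar s. \<forall>a\<in>cls A (band s0 0) p. band s i a p = a) \<and>
     (\<forall>p\<in>I. \<forall>q\<in>I. \<forall>r\<in>I. band_le (band s0 0) p q \<and> band_le (band s0 0) q r \<longrightarrow>
        (\<forall>s\<in>S. \<forall>i\<le>ar s. \<forall>a\<in>cls A (band s0 0) p. band s i (band s i a q) r = band s i a r)) \<and>
     \<comment> \<open>(3) A is the Plonka sum\<close>
     A = (\<Union>p\<in>I. cls A (band s0 0) p) \<and>
     (\<forall>s\<in>S. 1 \<le> ar s \<longrightarrow> (\<forall>xs. length xs = ar s \<and> set xs \<subseteq> A \<longrightarrow>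
        (let q = foldl (rjoin I (band s0 0)) (repr I (band s0 0) (hd xs)) (map (repr I (band s0 0)) (tl xs))
         in op s xs = op s (map (\<lambda>k. band s (Suc k) (xs ! k) q) [0..<ar s])))) \<and>
     ((\<exists>w\<in>S. ar w = 0) \<longrightarrow>
        (\<exists>bot\<in>I. (\<forall>p\<in>I. band_le (band s0 0) bot p) \<and>
           (\<forall>w\<in>S. ar w = 0 \<longrightarrow> op w [] = band w 0 (op w []) bot)))"
  
proof -
  let ?f = "band s0 0"
  have LN: "\<And>s i. s\<in>S \<Longrightarrow> i \<le> ar s \<Longrightarrow> left_normal_band A (band s i)"
    using ps unfolding partition_system_def by blast
  have LNf: "left_normal_band A ?f" using LN s0 by simp
  have hom: "\<And>s i a b. s\<in>S \<Longrightarrow> i \<le> ar s \<Longrightarrow> a\<in>A \<Longrightarrow> b\<in>A \<Longrightarrow> band_le (band s i) a b = band_le ?f a b"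
  proof -
    fix s i a b assume "s\<in>S" "i \<le> ar s" "a\<in>A" "b\<in>A"
    then show "band_le (band s i) a b = band_le ?f a b"
      using ps s0 unfolding partition_system_def homotactic_def by (meson le0)
  qed
  have PF4: "\<And>s xs b. s\<in>S \<Longrightarrow> 1 \<le> ar s \<Longrightarrow> length xs = ar s \<Longrightarrow> set xs \<subseteq> A \<Longrightarrow> b\<in>A \<Longrightarrow>
      band s 0 (op s xs) b = op s (map (\<lambda>k. band s (Suc k) (xs ! k) b) [0..<ar s])"
    using ps unfolding partition_system_def by blast
  have PF5: "\<And>s xs b. s\<in>S \<Longrightarrow> length xs = ar s \<Longrightarrow> set xs \<subseteq> A \<Longrightarrow> b\<in>A \<Longrightarrow>
      band s 0 b (op s xs) = foldl (band s 0) b xs"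
    using ps unfolding partition_system_def by blast
  have opA: "\<And>s xs. s\<in>S \<Longrightarrow> length xs = ar s \<Longrightarrow> set xs \<subseteq> A \<Longrightarrow> op s xs \<in> A"
    using alg unfolding is_algebra_def by blast
  have reprI: "\<And>a. a\<in>A \<Longrightarrow> repr I ?f a \<in> I \<and> band_eqv ?f a (repr I ?f a)"
    unfolding repr_def using I_rep by (rule_tac theI') blast
  have repr_uniq: "\<And>a p. a\<in>A \<Longrightarrow> p \<in> I \<Longrightarrow> band_eqv ?f a p \<Longrightarrow> repr I ?f a = p"
    unfolding repr_def using I_rep by (rule_tac the1_equality) blast+
  have IA: "\<And>p. p\<in>I \<Longrightarrow> p\<in>A" using I_sub by blast
  have trans: "\<And>a b c. a\<in>A \<Longrightarrow> b\<in>A \<Longrightarrow> c\<in>A \<Longrightarrow> band_le ?f a b \<Longrightarrow> band_le ?f b c \<Longrightarrow> band_le ?f a c"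
    using lnb_trans[OF LNf] by blast
  have refl: "\<And>a. a\<in>A \<Longrightarrow> band_le ?f a a" using lnb_idem[OF LNf] by (simp add: band_le_def)
  have clsD: "\<And>a p. a \<in> cls A ?f p \<Longrightarrow> a\<in>A \<and> band_le ?f a p \<and> band_le ?f p a"
    unfolding cls_def band_eqv_def by blast
  have clsI: "\<And>a p. a\<in>A \<Longrightarrow> band_le ?f a p \<Longrightarrow> band_le ?f p a \<Longrightarrow> a \<in> cls A ?f p"
    unfolding cls_def band_eqv_def by blast
  have eqvD: "\<And>a p. band_eqv ?f a p \<Longrightarrow> band_le ?f a p \<and> band_le ?f p a"
    unfolding band_eqv_def by blast

  have c1: "\<forall>p\<in>I. band_le (band s0 0) p p" using refl IA by blast
  have c2: "\<forall>p\<in>I. \<forall>q\<in>I. \<forall>r\<in>I. band_le (band s0 0) p q \<and> band_le (band s0 0) q r \<longrightarrow> band_le (band s0 0) p r"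
    using trans IA by blast
  have c3: "\<forall>p\<in>I. \<forall>q\<in>I. band_le (band s0 0) p q \<and> band_le (band s0 0) q p \<longrightarrow> p = q"
  proof (intro ballI impI)
    fix p q assume "p\<in>I" "q\<in>I" "band_le ?f p q \<and> band_le ?f q p"
    then show "p = q" using repr_uniq[of q q] repr_uniq[of q p] refl IA
      unfolding band_eqv_def by metis
  qed
  have c4: "\<forall>p\<in>I. \<forall>q\<in>I. rjoin I (band s0 0) p q \<in> I \<and>
        band_le (band s0 0) p (rjoin I (band s0 0) p q) \<and> band_le (band s0 0) q (rjoin I (band s0 0) p q) \<and>
        (\<forall>r\<in>I. band_le (band s0 0) p r \<and> band_le (band s0 0) q r \<longrightarrow> band_le (band s0 0) (rjoin I (band s0 0) p q) r)"
  proof (intro ballI)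
    fix p q assume p: "p\<in>I" and q: "q\<in>I"
    have pA: "p\<in>A" and qA: "q\<in>A" using p q IA by auto
    have jA: "?f p q \<in> A" using lnb_closed[OF LNf pA qA] .
    have r: "rjoin I ?f p q \<in> I" and e: "band_eqv ?f (?f p q) (rjoin I ?f p q)"
      using reprI[OF jA] unfolding rjoin_def by auto
    have rA: "rjoin I ?f p q \<in> A" using r IA by auto
    show "rjoin I ?f p q \<in> I \<and> band_le ?f p (rjoin I ?f p q) \<and> band_le ?f q (rjoin I ?f p q) \<and>
        (\<forall>r\<in>I. band_le ?f p r \<and> band_le ?f q r \<longrightarrow> band_le ?f (rjoin I ?f p q) r)"
    proof (intro conjI ballI impI)
      show "rjoin I ?f p q \<in> I" by fact
      show "band_le ?f p (rjoin I ?f p q)"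
        using trans[OF pA jA rA lnb_ub1[OF LNf pA qA]] eqvD[OF e] by blast
      show "band_le ?f q (rjoin I ?f p q)"
        using trans[OF qA jA rA lnb_ub2[OF LNf pA qA]] eqvD[OF e] by blast
      fix r' assume "r'\<in>I" "band_le ?f p r' \<and> band_le ?f q r'"
      then show "band_le ?f (rjoin I ?f p q) r'"
        using trans[OF rA jA IA[of r']] lnb_lub[OF LNf pA qA IA[of r']] eqvD[OF e] by blast
    qed
  qed
  have c5: "\<forall>p\<in>I. \<forall>s\<in>S. 1 \<le> ar s \<longrightarrow> (\<forall>xs. length xs = ar s \<and> set xs \<subseteq> cls A (band s0 0) p \<longrightarrow>
          op s xs \<in> cls A (band s0 0) p)"
  proof (intro ballI impI allI)
    fix p s xs assume p: "p\<in>I" and s: "s\<in>S" and ar: "1 \<le> ar s"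
      and xs: "length xs = ar s \<and> set xs \<subseteq> cls A ?f p"
    have pA: "p\<in>A" using p IA by auto
    have xsA: "set xs \<subseteq> A" using xs clsD by blast
    have uA: "op s xs \<in> A" using opA s xs xsA by blast
    have "map (\<lambda>k. band s (Suc k) (xs ! k) p) [0..<ar s] = map (\<lambda>k. xs ! k) [0..<ar s]"
    proof (rule map_cong[OF HOL.refl])
      fix k assume "k \<in> set [0..<ar s]"
      then have k: "k < length xs" "Suc k \<le> ar s" using xs by auto
      then have "xs!k \<in> cls A ?f p" using xs nth_mem by blast
      then have "band_le ?f p (xs!k)" "xs!k \<in> A" using clsD by auto
      then show "band s (Suc k) (xs ! k) p = xs ! k"
        using hom[OF s k(2) pA] by (simp add: band_le_def)
    qed
    also have "\<dots> = xs" using xs by (metis map_nth)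
    finally have "band s 0 (op s xs) p = op s xs" using PF4[OF s ar _ xsA pA] xs by simp
    then have le1: "band_le ?f p (op s xs)" using hom[OF s le0 pA uA] by (simp add: band_le_def)
    have "band s 0 p (op s xs) = p"
      unfolding PF5[OF s _ xsA pA, OF conjunct1[OF xs]]
    proof (rule foldl_fix, rule ballI)
      fix x assume "x \<in> set xs"
      then have "x\<in>A" "band_le ?f x p" using xs clsD by blast+
      then show "band s 0 p x = p" using hom[OF s le0 _ pA, of x] by (simp add: band_le_def)
    qed
    then have le2: "band_le ?f (op s xs) p" using hom[OF s le0 uA pA] by (simp add: band_le_def)
    show "op s xs \<in> cls A ?f p" using clsI uA le1 le2 by blast
  qed
  have c6: "\<forall>p\<in>I. \<forall>w\<in>S. ar w = 0 \<longrightarrow> band w 0 (op w []) p \<in> cls A (band s0 0) p"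
  proof (intro ballI impI)
    fix p w assume p: "p\<in>I" and w: "w\<in>S" and ar: "ar w = 0"
    have pA: "p\<in>A" using p IA by auto
    have oA: "op w [] \<in> A" using opA w ar by auto
    have L: "left_normal_band A (band w 0)" using LN w by simp
    have cA: "band w 0 (op w []) p \<in> A" using lnb_closed[OF L oA pA] .
    have P5: "\<And>b. b\<in>A \<Longrightarrow> band w 0 b (op w []) = b" using PF5[OF w] ar by simp
    have "band w 0 (band w 0 (op w []) p) p = band w 0 (op w []) p"
      using lnb_assoc[OF L oA pA pA] lnb_idem[OF L pA] by simp
    then have le1: "band_le ?f p (band w 0 (op w []) p)" using hom[OF w le0 pA cA] by (simp add: band_le_def)
    have "band w 0 p (band w 0 (op w []) p) = p"
      using lnb_assoc[OF L pA oA pA, symmetric] P5[OF pA] lnb_idem[OF L pA] by simp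
    then have le2: "band_le ?f (band w 0 (op w []) p) p" using hom[OF w le0 cA pA] by (simp add: band_le_def)
    show "band w 0 (op w []) p \<in> cls A ?f p" using clsI cA le1 le2 by blast
  qed
  have c7: "\<forall>p\<in>I. \<forall>q\<in>I. band_le (band s0 0) p q \<longrightarrow>
        (\<forall>s\<in>S. \<forall>i\<le>ar s. \<forall>a\<in>cls A (band s0 0) p. band s i a q \<in> cls A (band s0 0) q) \<and>
        (\<forall>s\<in>S. 1 \<le> ar s \<longrightarrow> (\<forall>xs. length xs = ar s \<and> set xs \<subseteq> cls A (band s0 0) p \<longrightarrow>
            band s 0 (op s xs) q = op s (map (\<lambda>k. band s (Suc k) (xs ! k) q) [0..<ar s]))) \<and>
        (\<forall>w\<in>S. ar w = 0 \<longrightarrow> band w 0 (band w 0 (op w []) p) q = band w 0 (op w []) q)"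
  proof (intro ballI impI conjI allI)
    fix p q assume p: "p\<in>I" and q: "q\<in>I" and pq: "band_le ?f p q"
    have pA: "p\<in>A" and qA: "q\<in>A" using p q IA by auto
    {
      fix s i a assume s: "s\<in>S" and i: "i \<le> ar s" and a: "a \<in> cls A ?f p"
      have L: "left_normal_band A (band s i)" using LN s i by simp
      have aA: "a\<in>A" and ap: "band_le ?f a p" using clsD[OF a] by auto
      have aq: "band_le ?f a q" using trans[OF aA pA qA ap pq] .
      have cA: "band s i a q \<in> A" using lnb_closed[OF L aA qA] .
      have "band s i (band s i a q) q = band s i a q"
        using lnb_assoc[OF L aA qA qA] lnb_idem[OF L qA] by simp
      then have le1: "band_le ?f q (band s i a q)" using hom[OF s i qA cA] by (simp add: band_le_def)
      have "band s i q (band s i a q) = band s i (band s i q a) q"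
        using lnb_assoc[OF L qA aA qA] by simp
      also have "band s i q a = q" using hom[OF s i aA qA] aq by (simp add: band_le_def)
      finally have "band s i q (band s i a q) = q" using lnb_idem[OF L qA] by simp
      then have le2: "band_le ?f (band s i a q) q" using hom[OF s i cA qA] by (simp add: band_le_def)
      show "band s i a q \<in> cls A ?f q" using clsI cA le1 le2 by blast
    }
    {
      fix s xs assume s: "s\<in>S" and ar: "1 \<le> ar s" and xs: "length xs = ar s \<and> set xs \<subseteq> cls A ?f p"
      have xsA: "set xs \<subseteq> A" using xs clsD by blast
      show "band s 0 (op s xs) q = op s (map (\<lambda>k. band s (Suc k) (xs ! k) q) [0..<ar s])"
        using PF4[OF s ar _ xsA qA] xs by simp
    }
    {
      fix w assume w: "w\<in>S" and ar: "ar w = 0"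
      have oA: "op w [] \<in> A" using opA w ar by auto
      have L: "left_normal_band A (band w 0)" using LN w by simp
      have "band w 0 (band w 0 (op w []) p) q = band w 0 (op w []) (band w 0 q p)"
        using lnb_ln[OF L oA pA qA] lnb_assoc[OF L oA qA pA] by simp
      also have "band w 0 q p = q" using hom[OF w le0 pA qA] pq by (simp add: band_le_def)
      finally show "band w 0 (band w 0 (op w []) p) q = band w 0 (op w []) q" .
    }
  qed
  have c8: "\<forall>p\<in>I. \<forall>q\<in>I. p \<noteq> q \<longrightarrow> cls A (band s0 0) p \<inter> cls A (band s0 0) q = {}"
  proof (intro ballI impI)
    fix p q assume p: "p\<in>I" and q: "q\<in>I" and ne: "p \<noteq> q"
    show "cls A ?f p \<inter> cls A ?f q = {}"
    proof (rule ccontr)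
      assume "cls A ?f p \<inter> cls A ?f q \<noteq> {}"
      then obtain a where "a \<in> cls A ?f p" "a \<in> cls A ?f q" by blast
      then have "a\<in>A" "band_eqv ?f a p" "band_eqv ?f a q" unfolding cls_def by auto
      then show False using repr_uniq p q ne by metis
    qed
  qed
  have c9: "\<forall>p\<in>I. \<forall>s\<in>S. \<forall>i\<le>ar s. \<forall>a\<in>cls A (band s0 0) p. band s i a p = a"
  proof (intro ballI allI impI)
    fix p s i a assume p: "p\<in>I" and s: "s\<in>S" and i: "i \<le> ar s" and a: "a \<in> cls A ?f p"
    have aA: "a\<in>A" and pa: "band_le ?f p a" using clsD[OF a] by auto
    then show "band s i a p = a" using hom[OF s i _ aA, of p] IA[OF p] by (simp add: band_le_def)
  qed
  have c10: "\<forall>p\<in>I. \<forall>q\<in>I. \<forall>r\<in>I. band_le (band s0 0) p q \<and> band_le (band s0 0) q r \<longrightarrow>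
        (\<forall>s\<in>S. \<forall>i\<le>ar s. \<forall>a\<in>cls A (band s0 0) p. band s i (band s i a q) r = band s i a r)"
  proof (intro ballI allI impI)
    fix p q r s i a assume p: "p\<in>I" and q: "q\<in>I" and r: "r\<in>I"
      and le: "band_le ?f p q \<and> band_le ?f q r" and s: "s\<in>S" and i: "i \<le> ar s" and a: "a \<in> cls A ?f p"
    have qA: "q\<in>A" and rA: "r\<in>A" using q r IA by auto
    have aA: "a\<in>A" using clsD[OF a] by auto
    have L: "left_normal_band A (band s i)" using LN s i by simp
    have "band s i (band s i a q) r = band s i a (band s i r q)"
      using lnb_ln[OF L aA qA rA] lnb_assoc[OF L aA rA qA] by simp
    also have "band s i r q = r" using hom[OF s i qA rA] le by (simp add: band_le_def)
    finally show "band s i (band s i a q) r = band s i a r" .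
  qed
  have c11: "A = (\<Union>p\<in>I. cls A (band s0 0) p)"
  proof
    show "A \<subseteq> (\<Union>p\<in>I. cls A ?f p)"
    proof
      fix a assume a: "a\<in>A"
      then show "a \<in> (\<Union>p\<in>I. cls A ?f p)" using reprI[OF a] unfolding cls_def by blast
    qed
    show "(\<Union>p\<in>I. cls A ?f p) \<subseteq> A" unfolding cls_def by blast
  qed
  have c12: "\<forall>s\<in>S. 1 \<le> ar s \<longrightarrow> (\<forall>xs. length xs = ar s \<and> set xs \<subseteq> A \<longrightarrow>
        (let q = foldl (rjoin I (band s0 0)) (repr I (band s0 0) (hd xs)) (map (repr I (band s0 0)) (tl xs))
         in op s xs = op s (map (\<lambda>k. band s (Suc k) (xs ! k) q) [0..<ar s])))"
  proof (intro ballI impI allI)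
    fix s xs assume s: "s\<in>S" and ar: "1 \<le> ar s" and xs: "length xs = ar s \<and> set xs \<subseteq> A"
    define u where "u = op s xs"
    have xsA: "set xs \<subseteq> A" using xs by simp
    have uA: "u \<in> A" using opA s xs unfolding u_def by blast
    have L: "left_normal_band A (band s 0)" using LN s by simp
    have ufold: "u = foldl (band s 0) u xs"
      using PF5[OF s _ xsA uA] xs lnb_idem[OF L uA] unfolding u_def by simp
    have xle: "\<And>x. x \<in> set xs \<Longrightarrow> band_le ?f x u"
    proof -
      fix x assume x: "x \<in> set xs"
      have "band s 0 u x = u" using foldl_absorb[OF L uA xsA x] ufold by simp
      then show "band_le ?f x u" using hom[OF s le0 _ uA, of x] x xsA by (auto simp: band_le_def)
    qed
    have rle: "\<And>x. x \<in> set xs \<Longrightarrow> repr I ?f x \<in> A \<and> band_le ?f (repr I ?f x) u"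
    proof -
      fix x assume x: "x \<in> set xs"
      then have xA: "x\<in>A" using xsA by auto
      have "repr I ?f x \<in> I" "band_le ?f (repr I ?f x) x" using reprI[OF xA] eqvD by auto
      then show "repr I ?f x \<in> A \<and> band_le ?f (repr I ?f x) u"
        using trans[OF _ xA uA _ xle[OF x]] IA by blast
    qed
    have fold: "\<And>a. a\<in>A \<Longrightarrow> band_le ?f a u \<Longrightarrow> (\<forall>y\<in>set ys. y\<in>A \<and> band_le ?f y u) \<Longrightarrow>
        foldl (rjoin I ?f) a ys \<in> A \<and> band_le ?f (foldl (rjoin I ?f) a ys) u" for ys
    proof (induction ys)
      case Nil then show ?case by simp
    next
      case (Cons y ys a)
      have yA: "y\<in>A" and yu: "band_le ?f y u" using Cons.prems by auto
      have jA: "?f a y \<in> A" using lnb_closed[OF LNf Cons.prems(1) yA] .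
      have ju: "band_le ?f (?f a y) u" using lnb_lub[OF LNf Cons.prems(1) yA uA Cons.prems(2) yu] .
      have rI: "rjoin I ?f a y \<in> I" and e: "band_eqv ?f (?f a y) (rjoin I ?f a y)"
        using reprI[OF jA] unfolding rjoin_def by auto
      have rA: "rjoin I ?f a y \<in> A" using rI IA by auto
      have "band_le ?f (rjoin I ?f a y) u" using trans[OF rA jA uA _ ju] eqvD[OF e] by blast
      then show ?case using Cons.IH[OF rA] Cons.prems by simp
    qed
    have ne: "xs \<noteq> []" using xs ar by auto
    define q where "q = foldl (rjoin I ?f) (repr I ?f (hd xs)) (map (repr I ?f) (tl xs))"
    have "q \<in> A \<and> band_le ?f q u" unfolding q_def
    proof (rule fold)
      show "repr I ?f (hd xs) \<in> A" "band_le ?f (repr I ?f (hd xs)) u"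
        using rle[OF hd_in_set[OF ne]] by auto
      show "\<forall>y\<in>set (map (repr I ?f) (tl xs)). y \<in> A \<and> band_le ?f y u"
        using rle ne by (auto dest: list.set_sel(2))
    qed
    then have qA: "q\<in>A" and qu: "band_le ?f q u" by auto
    have "band s 0 u q = u" using hom[OF s le0 qA uA] qu by (simp add: band_le_def)
    then have "op s xs = op s (map (\<lambda>k. band s (Suc k) (xs ! k) q) [0..<ar s])"
      using PF4[OF s ar _ xsA qA] xs unfolding u_def by simp
    then show "let q = foldl (rjoin I ?f) (repr I ?f (hd xs)) (map (repr I ?f) (tl xs))
         in op s xs = op s (map (\<lambda>k. band s (Suc k) (xs ! k) q) [0..<ar s])"
      unfolding Let_def q_def .
  qed
  have c13: "(\<exists>w\<in>S. ar w = 0) \<longrightarrow>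
        (\<exists>bot\<in>I. (\<forall>p\<in>I. band_le (band s0 0) bot p) \<and>
           (\<forall>w\<in>S. ar w = 0 \<longrightarrow> op w [] = band w 0 (op w []) bot))"
  proof
    assume "\<exists>w\<in>S. ar w = 0"
    then obtain w where w: "w\<in>S" "ar w = 0" by blast
    have low: "\<And>w' b. w'\<in>S \<Longrightarrow> ar w' = 0 \<Longrightarrow> b\<in>A \<Longrightarrow> op w' [] \<in> A \<and> band_le ?f (op w' []) b"
    proof -
      fix w' b assume w': "w'\<in>S" "ar w' = 0" and b: "b\<in>A"
      have oA: "op w' [] \<in> A" using opA w' by auto
      have "band w' 0 b (op w' []) = b" using PF5[OF w'(1)] w'(2) b by simp
      then show "op w' [] \<in> A \<and> band_le ?f (op w' []) b"
        using hom[OF w'(1) le0 oA b] oA by (simp add: band_le_def)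
    qed
    have oA: "op w [] \<in> A" using opA[OF w(1), of "[]"] w(2) by simp
    define bot where "bot = repr I ?f (op w [])"
    have bI: "bot \<in> I" and e: "band_eqv ?f (op w []) bot" using reprI[OF oA] unfolding bot_def by auto
    have bA: "bot\<in>A" using bI IA by auto
    have bo: "band_le ?f bot (op w [])" using eqvD[OF e] by blast
    show "\<exists>bot\<in>I. (\<forall>p\<in>I. band_le ?f bot p) \<and> (\<forall>w\<in>S. ar w = 0 \<longrightarrow> op w [] = band w 0 (op w []) bot)"
    proof (intro bexI[OF _ bI] conjI ballI impI)
      fix p assume p: "p\<in>I"
      show "band_le ?f bot p" using trans[OF bA oA IA[OF p] bo] low[OF w IA[OF p]] by blast
    next
      fix w' assume w': "w'\<in>S" "ar w' = 0"
      have o'A: "op w' [] \<in> A" and le: "band_le ?f (op w []) (op w' [])"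
        using low[OF w' oA] low[OF w] by (auto dest: spec)
      have le': "band_le ?f (op w []) (op w' [])" using low[OF w] low[OF w' oA] o'A by blast
      have "band_le ?f bot (op w' [])" using trans[OF bA oA o'A bo] low[OF w o'A] by blast
      then show "op w' [] = band w' 0 (op w' []) bot" using hom[OF w'(1) le0 bA o'A] by (simp add: band_le_def)
    qed
  qed
  show ?thesis by (intro conjI c1 c2 c3 c4 c5 c6 c7 c8 c9 c10 c11 c12 c13)
qed

end
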